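(* Let $\widetilde\Omega\subset Q^{n+2}$ be the set of all $(\mathbf a_0,\dots,\mathbf a_{n+1})$, $\mathbf a_j\in Q$, such that $|\langle\mathbf a_j,\mathbf a_k\rangle-1|<1$ for all $j,k$. Then $\widetilde\Omega$ is pathwise connected.
   Context: $\mathbb C^{n+1}$ carries the bilinear (not Hermitian) form $\langle\mathbf z,\mathbf w\rangle=\sum_{j=0}^nz_jw_j$, and $Q=\{\mathbf z\in\mathbb C^{n+1}:\langle\mathbf z,\mathbf z\rangle=1\}$. *)

theory Defs
  imports "HOL-Analysis.Analysis"
begin

text \<open>Points of C^(n+1) are vectors complex^'n with CARD('n) = n+1.
  The bilinear (non-Hermitian) form.\<close>
definition bform :: "complex ^ 'n \<Rightarrow> complex ^ 'n \<Rightarrow> complex" where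
  "bform z w = (\<Sum>j\<in>UNIV. z $ j * w $ j)"

definition Qset :: "(complex ^ 'n) set" where
  "Qset = {z. bform z z = 1}"

text \<open>Tuples (a_0,...,a_(n+1)) are indexed by a finite type 'm with CARD('m) = CARD('n) + 1.\<close>
definition OmegaT :: "((complex ^ 'n) ^ 'm) set" where
  "OmegaT = {a. (\<forall>j. a $ j \<in> Qset) \<and> (\<forall>j k. cmod (bform (a $ j) (a $ k) - 1) < 1)}"

end

theory Submission
  imports Defs
begin

lemma poly_ineq:
  fixes p g :: real
  assumes p0: "0 \<le> p" and p1: "p \<le> 1" and g0: "0 \<le> g" and g1: "g \<le> 1"
  shows "(2*p^2 + (2*p*(1-p))^2 * (1-g^2) / (p^2+(1-p)^2))^2
         \<le> 4*(1 - 2*(2*p*(1-p))*g + (2*p*(1-p))^2*(2*g^2-1))"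
proof -
  define q where "q = 1 - p"
  define P where "P = p^2 + q^2"
  define h where "h = 1 - g"
  define k where "k = 1 - g^2"
  have q0: "0 \<le> q" using p1 q_def by simp
  have Peq: "P = 2*(p-1/2)^2 + 1/2" unfolding P_def q_def by (simp add: power2_eq_square algebra_simps)
  have Ppos: "P > 0" unfolding Peq by (rule add_nonneg_pos) simp_all
  have pP: "p^2 \<le> P" unfolding P_def by simp
  have PP: "4*p^2*q^2 \<le> P^2"
  proof -
    have "P^2 - 4*p^2*q^2 = (p^2-q^2)^2" unfolding P_def by (simp add: power2_eq_square algebra_simps)
    moreover have "0 \<le> (p^2-q^2)^2" by simp
    ultimately show ?thesis by linarith
  qed
  have k0: "0 \<le> k" unfolding k_def using power_le_one[OF g0 g1, of 2] by simp
  have kh: "k = h*(2-h)" unfolding k_def h_def by (simp add: power2_eq_square algebra_simps)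
  have h0: "0 \<le> h" "h \<le> 1" using g0 g1 h_def by auto
  define Z where "Z = p^2*q^2*k/P"
  have Z0: "0 \<le> Z" unfolding Z_def using k0 Ppos by simp
  have Z1: "Z \<le> q^2*k"
  proof -
    have "Z = q^2*k*(p^2/P)" unfolding Z_def by simp
    also have "\<dots> \<le> q^2*k*1" using pP Ppos k0 by (intro mult_left_mono) (auto simp: field_simps)
    finally show ?thesis by simp
  qed
  have Z2: "4*Z^2 \<le> p^2*q^2*k^2"
  proof -
    have "4*Z^2 = p^2*q^2*k^2 * (4*p^2*q^2/P^2)" unfolding Z_def by (simp add: power2_eq_square field_simps)
    also have "\<dots> \<le> p^2*q^2*k^2 * 1" using PP Ppos by (intro mult_left_mono) (auto simp: field_simps)
    finally show ?thesis by simp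
  qed
  have lhs: "(2*p^2 + (2*p*(1-p))^2 * (1-g^2) / (p^2+(1-p)^2)) = 2*p^2 + 4*Z"
    unfolding Z_def P_def k_def q_def by (simp add: power2_eq_square field_simps)
  have iden: "(1 - 2*(2*p*(1-p))*g + (2*p*(1-p))^2*(2*g^2-1)) - p^4
      = 4*p*q*h*(p-q)^2 + q^4 + 2*p^2*q^2 + 8*p^2*q^2*h^2"
    unfolding q_def h_def by (simp add: power2_eq_square power4_eq_xxxx algebra_simps)
  have f: "0 \<le> 2*(1-2*h)^2 + 4*h^3 - h^4"
  proof -
    have "h^4 \<le> h^3" using h0 by (simp add: power_decreasing)
    moreover have "0 \<le> (1-2*h)^2" by simp
    moreover have "0 \<le> h^3" using h0 by simp
    ultimately show ?thesis by linarith
  qed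
  have t1: "0 \<le> p^2*q^2*(2*(1-2*h)^2 + 4*h^3 - h^4)" using f by simp
  have t2: "0 \<le> 4*p*q*h*(p-q)^2" using p0 q0 h0 by simp
  have t3: "4*p^2*Z \<le> 4*p^2*q^2*k" using Z1 by (simp add: mult_left_mono)
  have e: "p^2*q^2*(2*(1-2*h)^2 + 4*h^3 - h^4) = 2*p^2*q^2 + 8*p^2*q^2*h^2 - 4*p^2*q^2*k - p^2*q^2*k^2"
    unfolding kh by (simp add: power2_eq_square power3_eq_cube power4_eq_xxxx algebra_simps)
  define L where "L = 1 - 2*(2*p*(1-p))*g + (2*p*(1-p))^2*(2*g^2-1)"
  have E: "L = (p^4 + 4*p^2*q^2*k + p^2*q^2*k^2) + (4*p*q*h*(p-q)^2 + q^4 + p^2*q^2*(2*(1-2*h)^2 + 4*h^3 - h^4))"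
    unfolding L_def q_def h_def k_def by (simp add: power2_eq_square power3_eq_cube power4_eq_xxxx algebra_simps)
  have R: "0 \<le> 4*p*q*h*(p-q)^2 + q^4 + p^2*q^2*(2*(1-2*h)^2 + 4*h^3 - h^4)"
    using t1 t2 by simp
  have M: "p^4 + 4*p^2*Z + 4*Z^2 \<le> p^4 + 4*p^2*q^2*k + p^2*q^2*k^2"
    using t3 Z2 by (simp add: add_mono)
  have "(2*p^2 + 4*Z)^2 = 4*(p^4 + 4*p^2*Z + 4*Z^2)" by (simp add: power2_eq_square power4_eq_xxxx algebra_simps)
  also have "\<dots> \<le> 4*L" using M R E by simp
  finally show ?thesis using lhs L_def by simp
qed


lemma keyK:
  fixes d e :: complex and p :: real
  assumes d1: "cmod d \<le> 1" and e1: "cmod e \<le> 1" and p0: "0 \<le> p" and p1: "p \<le> 1"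
  shows "cmod (csqrt (1 - of_real (2*p*(1-p)) * d) - csqrt (1 - of_real (2*p*(1-p)) * e))^2 + 2*p^2
     \<le> 2 * cmod (csqrt (1 - of_real (2*p*(1-p)) * d)) * cmod (csqrt (1 - of_real (2*p*(1-p)) * e))"
proof -
  define k where "k = 2*p*(1-p)"
  define A where "A = 1 - of_real k * d"
  define B where "B = 1 - of_real k * e"
  define a where "a = csqrt A"
  define b where "b = csqrt B"
  have k0: "0 \<le> k" unfolding k_def using p0 p1 by simp
  have kh: "1/2 - k = 2*(p-1/2)^2" unfolding k_def by (simp add: power2_eq_square algebra_simps)
  have k1: "k \<le> 1/2" using kh by (smt (verit) zero_le_power2)
  have aA: "a^2 = A" unfolding a_def by simp
  have bB: "b^2 = B" unfolding b_def by simp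
  have ReA: "Re A = 1 - k * Re d" unfolding A_def by simp
  have ImA: "Im A = - k * Im d" unfolding A_def by simp
  have ReB: "Re B = 1 - k * Re e" unfolding B_def by simp
  have ImB: "Im B = - k * Im e" unfolding B_def by simp
  have "Re d \<le> 1" using d1 complex_Re_le_cmod order_trans by blast
  hence ReA1: "1 - k \<le> Re A" using ReA k0 by (simp add: mult_left_le)
  have "Re e \<le> 1" using e1 complex_Re_le_cmod order_trans by blast
  hence ReB1: "1 - k \<le> Re B" using ReB k0 by (simp add: mult_left_le)
  define ra where "ra = Re a"
  define ia where "ia = Im a"
  define rb where "rb = Re b"
  define ib where "ib = Im b"
  have ra0: "0 \<le> ra" unfolding ra_def a_def by (rule Re_csqrt)
  have rb0: "0 \<le> rb" unfolding rb_def b_def by (rule Re_csqrt)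
  have ReA2: "Re A = ra^2 - ia^2" "Im A = 2*ra*ia" unfolding aA[symmetric] ra_def ia_def
    by (simp_all add: power2_eq_square)
  have ReB2: "Re B = rb^2 - ib^2" "Im B = 2*rb*ib" unfolding bB[symmetric] rb_def ib_def
    by (simp_all add: power2_eq_square)
  have iara: "\<bar>ia\<bar> \<le> ra"
  proof -
    have "ia^2 \<le> ra^2" using ReA2 ReA1 k1 by linarith
    thus ?thesis using abs_le_square_iff[of ia ra] ra0 by simp
  qed
  have ibrb: "\<bar>ib\<bar> \<le> rb"
  proof -
    have "ib^2 \<le> rb^2" using ReB2 ReB1 k1 by linarith
    thus ?thesis using abs_le_square_iff[of ib rb] rb0 by simp
  qed
  define S where "S = ra*rb + ia*ib"
  have S0: "0 \<le> S"
  proof -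
    have "\<bar>ia*ib\<bar> \<le> ra*rb" unfolding abs_mult using iara ibrb by (intro mult_mono) auto
    thus ?thesis unfolding S_def by linarith
  qed
  have na: "cmod a ^2 = ra^2 + ia^2" unfolding ra_def ia_def by (simp add: cmod_power2)
  have nb: "cmod b ^2 = rb^2 + ib^2" unfolding rb_def ib_def by (simp add: cmod_power2)
  have nab: "cmod (a-b) ^2 = cmod a^2 + cmod b^2 - 2*S"
    unfolding cmod_power2 S_def ra_def ia_def rb_def ib_def by (simp add: power2_eq_square algebra_simps)
  have S2: "S^2 \<ge> Re A * Re B + Im A * Im B"
  proof -
    have "S^2 - (Re A * Re B + Im A * Im B) = (ra*ib - ia*rb)^2"
      unfolding ReA2 ReB2 S_def by (simp add: power2_eq_square algebra_simps)
    thus ?thesis by (smt (verit) zero_le_power2)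
  qed
  define g where "g = cmod (d + e) / 2"
  have g0: "0 \<le> g" unfolding g_def by simp
  have g1: "g \<le> 1" unfolding g_def using norm_triangle_ineq[of d e] d1 e1 by simp
  have par: "cmod (d - e)^2 + cmod (d+e)^2 = 2*cmod d^2 + 2*cmod e^2"
    unfolding cmod_power2 by (simp add: power2_eq_square algebra_simps)
  have dd: "cmod d ^2 \<le> 1" using d1 by (simp add: power_le_one)
  have ee: "cmod e ^2 \<le> 1" using e1 by (simp add: power_le_one)
  have sumRe: "Re d + Re e \<le> 2*g" unfolding g_def using complex_Re_le_cmod[of "d+e"] by simp
  have prodRe: "Re d * Re e + Im d * Im e \<ge> 2*g^2 - 1"
  proof -
    have "cmod (d+e)^2 = cmod d^2 + cmod e^2 + 2*(Re d * Re e + Im d * Im e)"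
      unfolding cmod_power2 by (simp add: power2_eq_square algebra_simps)
    moreover have "cmod (d+e)^2 = 4*g^2" unfolding g_def by (simp add: power2_eq_square)
    ultimately have "4*g^2 = cmod d^2 + cmod e^2 + 2*(Re d * Re e + Im d * Im e)" by simp
    moreover have gen: "\<And>X Y Z G::real. 4*G = Y + Z + 2*X \<Longrightarrow> Y \<le> 1 \<Longrightarrow> Z \<le> 1 \<Longrightarrow> 2*G - 1 \<le> X"
      by linarith
    ultimately show ?thesis using dd ee by blast
  qed
  define Lb where "Lb = 1 - 2*k*g + k^2*(2*g^2-1)"
  have RAB: "Re A * Re B + Im A * Im B = 1 - k*(Re d + Re e) + k^2*(Re d * Re e + Im d * Im e)"
    unfolding ReA ImA ReB ImB by (simp add: power2_eq_square algebra_simps)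
  have LbRAB: "Lb \<le> Re A * Re B + Im A * Im B"
  proof -
    have "k*(Re d + Re e) \<le> k*(2*g)" using sumRe k0 by (simp add: mult_left_mono)
    moreover have "k^2*(2*g^2-1) \<le> k^2*(Re d * Re e + Im d * Im e)" using prodRe by (simp add: mult_left_mono)
    ultimately show ?thesis unfolding RAB Lb_def by linarith
  qed
  have dmeg: "cmod (d - e)^2 \<le> 4 - 4*g^2"
  proof -
    have "cmod (d+e)^2 = 4*g^2" unfolding g_def by (simp add: power2_eq_square)
    thus ?thesis using par dd ee by linarith
  qed
  have nA: "cmod a ^2 = cmod A" unfolding aA[symmetric] by (simp add: norm_power)
  have nB: "cmod b ^2 = cmod B" unfolding bB[symmetric] by (simp add: norm_power)
  have AB: "A - B = - of_real k * (d - e)" unfolding A_def B_def by (simp add: algebra_simps)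
  have nAB: "cmod (A - B)^2 \<le> k^2 * (4 - 4*g^2)"
  proof -
    have "cmod (A-B)^2 = k^2 * cmod (d-e)^2" unfolding AB using k0 by (simp add: norm_mult power_mult_distrib)
    thus ?thesis using dmeg by (simp add: mult_left_mono)
  qed
  have diff1: "(cmod A - cmod B)^2 \<le> cmod (A-B)^2"
  proof -
    have "\<bar>cmod A - cmod B\<bar> \<le> cmod (A-B)" by (rule norm_triangle_ineq3)
    thus ?thesis using abs_le_square_iff[of "cmod A - cmod B" "cmod (A-B)"] by simp
  qed
  have la: "sqrt (1-k) \<le> cmod a"
  proof -
    have "1 - k \<le> cmod a ^2" using nA ReA1 complex_Re_le_cmod[of A] by linarith
    thus ?thesis by (simp add: real_le_lsqrt)
  qed
  have lb: "sqrt (1-k) \<le> cmod b"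
  proof -
    have "1 - k \<le> cmod b ^2" using nB ReB1 complex_Re_le_cmod[of B] by linarith
    thus ?thesis by (simp add: real_le_lsqrt)
  qed
  have sum4: "4*(1-k) \<le> (cmod a + cmod b)^2"
  proof -
    have "2 * sqrt(1-k) \<le> cmod a + cmod b" using la lb by simp
    hence "(2 * sqrt(1-k))^2 \<le> (cmod a + cmod b)^2" using power_mono[of "2 * sqrt(1-k)" _ 2] k1 by simp
    thus ?thesis using k1 by (simp add: power_mult_distrib)
  qed
  have Pk: "p^2 + (1-p)^2 = 1 - k" unfolding k_def by (simp add: power2_eq_square algebra_simps)
  define Ub where "Ub = k^2*(1-g^2)/(1-k)"
  have Ub: "(cmod a - cmod b)^2 \<le> Ub"
  proof -
    have "(cmod a - cmod b)^2 * (cmod a + cmod b)^2 = (cmod A - cmod B)^2"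
      unfolding nA[symmetric] nB[symmetric] by (simp add: power2_eq_square algebra_simps)
    also have "\<dots> \<le> k^2*(4-4*g^2)" using diff1 nAB by linarith
    finally have X: "(cmod a - cmod b)^2 * (cmod a + cmod b)^2 \<le> k^2*(4-4*g^2)" .
    have "(cmod a - cmod b)^2 * (4*(1-k)) \<le> (cmod a - cmod b)^2 * (cmod a + cmod b)^2"
      using sum4 by (simp add: mult_left_mono)
    hence "(cmod a - cmod b)^2 * (4*(1-k)) \<le> k^2*(4-4*g^2)" using X by linarith
    hence "(cmod a - cmod b)^2 * (1-k) \<le> k^2*(1-g^2)" by (simp add: algebra_simps)
    thus ?thesis unfolding Ub_def using k1 by (simp add: pos_le_divide_eq)
  qed
  have eq1: "2*p^2 + Ub = 2*p^2 + (2*p*(1-p))^2 * (1-g^2) / (p^2+(1-p)^2)"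
    unfolding Ub_def Pk k_def ..
  have eq2: "4*Lb = 4*(1 - 2*(2*p*(1-p))*g + (2*p*(1-p))^2*(2*g^2-1))"
    unfolding Lb_def k_def ..
  have poly: "(2*p^2 + Ub)^2 \<le> 4*Lb"
    unfolding eq1 eq2 by (rule poly_ineq[OF p0 p1 g0 g1])
  define M where "M = (cmod a - cmod b)^2 + 2*p^2"
  have M0: "0 \<le> M" unfolding M_def by simp
  have "M \<le> 2*p^2 + Ub" using Ub unfolding M_def by simp
  hence "M^2 \<le> (2*p^2 + Ub)^2" using M0 by (rule power_mono)
  also have "\<dots> \<le> 4*S^2" using poly LbRAB S2 by linarith
  also have "\<dots> = (2*S)^2" by (simp add: power2_eq_square)
  finally have M2: "M^2 \<le> (2*S)^2" .
  have MS: "M \<le> 2*S" using power2_le_imp_le[OF M2] S0 by simp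
  have Me: "M = cmod a^2 + cmod b^2 - 2*(cmod a * cmod b) + 2*p^2" unfolding M_def power2_diff by simp
  have "cmod (a-b)^2 + 2*p^2 \<le> 2*cmod a*cmod b"
    using MS Me nab by linarith
  thus ?thesis unfolding a_def b_def A_def B_def k_def .
qed


lemma ReA_pos:
  fixes u :: complex and t :: real
  assumes "cmod (u-1) < 1" "0 \<le> t" "t \<le> 1"
  shows "0 < Re ((1 - of_real t)^2 + 2*(1 - of_real t)* of_real t*u + (of_real t)^2)"
proof -
  have "Re ((1 - of_real t)^2 + 2*(1 - of_real t)* of_real t*u + (of_real t)^2)
     = (1-t)^2 + 2*(1-t)*t*Re u + t^2" by (simp add: power2_eq_square)
  moreover have "0 < Re u"
  proof -
    have "Re (1 - u) \<le> cmod (u - 1)" using complex_Re_le_cmod[of "1-u"] by (simp add: norm_minus_commute)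
    thus ?thesis using assms(1) by simp
  qed
  moreover have "0 \<le> 2*(1-t)*t*Re u" using assms calculation(2) by simp
  moreover have "0 < (1-t)^2 + t^2"
  proof (cases "t = 0")
    case True thus ?thesis by simp
  next
    case False thus ?thesis by (simp add: add_nonneg_pos)
  qed
  ultimately show ?thesis by linarith
qed

lemma keyC:
  fixes w u v :: complex and t :: real
  assumes w1: "cmod (w-1) < 1" and u1: "cmod (u-1) < 1" and v1: "cmod (v-1) < 1"
    and t0: "0 \<le> t" and t1: "t \<le> 1"
  shows "cmod (((1 - of_real t)^2*w + (1 - of_real t)* of_real t*u + of_real t*(1 - of_real t)* v + (of_real t)^2)
           / (csqrt ((1 - of_real t)^2 + 2*(1 - of_real t)* of_real t*u + (of_real t)^2)
            * csqrt ((1 - of_real t)^2 + 2*(1 - of_real t)* of_real t* v + (of_real t)^2)) - 1) < 1"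
proof -
  define T where "T = (of_real t :: complex)"
  define p where "p = 1 - t"
  define C where "C = (1 - T)^2*w + (1 - T)*T*u + T*(1 - T)* v + T^2"
  define A where "A = (1 - T)^2 + 2*(1 - T)*T*u + T^2"
  define B where "B = (1 - T)^2 + 2*(1 - T)*T* v + T^2"
  define a where "a = csqrt A"
  define b where "b = csqrt B"
  have p0: "0 \<le> p" "p \<le> 1" using t0 t1 p_def by auto
  have Ae: "A = 1 - of_real (2*p*(1-p)) * (1-u)" unfolding A_def p_def T_def
    by (simp add: power2_eq_square algebra_simps)
  have Be: "B = 1 - of_real (2*p*(1-p)) * (1-v)" unfolding B_def p_def T_def
    by (simp add: power2_eq_square algebra_simps)
  have Ce: "2*C = A + B - 2 * of_real (p^2) * (1-w)" unfolding C_def A_def B_def p_def T_def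
    by (simp add: power2_eq_square algebra_simps)
  have K: "cmod (a-b)^2 + 2*p^2 \<le> 2*cmod a*cmod b"
    unfolding a_def b_def Ae Be
    by (rule keyK) (use u1 v1 p0 in \<open>auto simp: norm_minus_commute\<close>)
  have aA: "a^2 = A" unfolding a_def by simp
  have bB: "b^2 = B" unfolding b_def by simp
  have Cab: "2*(C - a*b) = (a-b)^2 - 2 * of_real (p^2) * (1-w)"
  proof -
    have "2*(C - a*b) = 2*C - 2*a*b" by (simp add: algebra_simps)
    also have "\<dots> = a^2 + b^2 - 2 * of_real (p^2) * (1-w) - 2*a*b" unfolding Ce aA bB ..
    also have "\<dots> = (a-b)^2 - 2 * of_real (p^2) * (1-w)" by (simp add: power2_eq_square algebra_simps)
    finally show ?thesis .
  qed
  have nCab: "cmod (C - a*b) \<le> cmod (a-b)^2/2 + p^2 * cmod (1-w)"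
  proof -
    have "cmod (2*(C - a*b)) \<le> cmod ((a-b)^2) + cmod (2 * of_real (p^2) * (1-w))"
      unfolding Cab by (rule norm_triangle_ineq4)
    moreover have "cmod (2*(C - a*b)) = 2 * cmod (C - a*b)" by (simp only: norm_mult) simp
    moreover have "cmod ((a-b)^2) = cmod (a-b)^2" by (rule norm_power)
    moreover have "cmod (2 * of_real (p^2) * (1-w)) = 2*p^2*cmod (1-w)" by (simp add: norm_mult norm_power)
    ultimately show ?thesis by linarith
  qed
  have lt: "cmod (C - a*b) < cmod (a*b)"
  proof (cases "p = 0")
    case True
    hence "t = 1" using p_def by simp
    hence "A = 1" "B = 1" "C = 1" unfolding A_def B_def C_def T_def by simp_all
    thus ?thesis unfolding a_def b_def by simp
  next
    case False
    hence "0 < p^2" by simp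
    moreover have "cmod (1-w) < 1" using w1 by (simp add: norm_minus_commute)
    ultimately have "p^2 * cmod (1-w) < p^2" by simp
    hence "cmod (C - a*b) < cmod (a-b)^2/2 + p^2" using nCab by linarith
    also have "\<dots> \<le> cmod (a*b)" using K by (simp add: norm_mult)
    finally show ?thesis .
  qed
  have ab0: "a*b \<noteq> 0" using lt by auto
  have "C/(a*b) - 1 = (C - a*b)/(a*b)" using ab0 by (simp add: field_simps)
  hence "cmod (C/(a*b) - 1) = cmod (C - a*b) / cmod (a*b)" by (simp add: norm_divide)
  also have "\<dots> < 1" using lt ab0 by simp
  finally show ?thesis unfolding C_def a_def b_def A_def B_def T_def .
qed


definition seg :: "real \<Rightarrow> complex^'n \<Rightarrow> complex^'n \<Rightarrow> complex^'n" where
  "seg t x y = (\<chi> i. (1 - of_real t) * x$i + of_real t * y$i)"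

definition nrm :: "complex^'n \<Rightarrow> complex^'n" where
  "nrm z = (\<chi> i. z$i / csqrt (bform z z))"

lemma bform_comm: "bform z w = bform w z"
  unfolding bform_def by (simp add: mult.commute)

lemma bform_seg:
  "bform (seg t x y) (seg t x' y') = (1 - of_real t)^2 * bform x x' + (1 - of_real t) * of_real t * bform x y'
      + of_real t * (1 - of_real t) * bform y x' + (of_real t)^2 * bform y y'"
  unfolding bform_def seg_def sum_distrib_left sum.distrib[symmetric] vec_lambda_beta
  by (rule sum.cong) (simp_all add: power2_eq_square algebra_simps)

lemma bform_nrm:
  "bform (nrm z) (nrm w) = bform z w / (csqrt (bform z z) * csqrt (bform w w))"
  unfolding nrm_def bform_def by (simp add: sum_divide_distrib)

lemma seg0: "seg 0 x y = x" unfolding seg_def by (simp add: vec_eq_iff)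
lemma seg1: "seg 1 x y = y" unfolding seg_def by (simp add: vec_eq_iff)
lemma nrmQ: "z \<in> Qset \<Longrightarrow> nrm z = z" unfolding nrm_def Qset_def by (simp add: vec_eq_iff)

lemma nrm_in_Q: "bform z z \<noteq> 0 \<Longrightarrow> nrm z \<in> Qset"
  unfolding Qset_def using bform_nrm[of z z] by (simp add: power2_eq_square[symmetric])

lemma cont_bform_seg: "continuous_on S (\<lambda>t. bform (seg t x y) (seg t x' y'))"
  unfolding bform_seg by (intro continuous_intros)

lemma cont_seg: "continuous_on S (\<lambda>t. seg t x y $ i)"
  unfolding seg_def by (simp; intro continuous_intros)

lemma seg_self:
  assumes "x \<in> Qset" "y \<in> Qset"
  shows "bform (seg t x y) (seg t x y) = (1 - of_real t)^2 + 2*(1 - of_real t) * of_real t * bform x y + (of_real t)^2"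
  using assms unfolding bform_seg Qset_def by (simp add: bform_comm[of y x] algebra_simps)

lemma to_diag:
  assumes a: "a \<in> OmegaT"
  shows "path_component OmegaT a (\<chi> j. a $ j0)"
proof -
  define b where "b = a $ j0"
  have aQ: "\<And>j. a $ j \<in> Qset" and aD: "\<And>j k. cmod (bform (a$j) (a$k) - 1) < 1"
    using a unfolding OmegaT_def by auto
  have bQ: "b \<in> Qset" unfolding b_def by (rule aQ)
  have bD: "\<And>j. cmod (bform (a$j) b - 1) < 1" unfolding b_def by (rule aD)
  define g where "g = (\<lambda>t. \<chi> j. nrm (seg t (a$j) b))"
  have Xpos: "\<And>j t. 0 \<le> t \<Longrightarrow> t \<le> 1 \<Longrightarrow> 0 < Re (bform (seg t (a$j) b) (seg t (a$j) b))"
    unfolding seg_self[OF aQ bQ] by (rule ReA_pos[OF bD])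
  have start: "g 0 = a" unfolding g_def seg0 using aQ by (simp add: nrmQ vec_eq_iff)
  have finish: "g 1 = (\<chi> j. a $ j0)" using nrmQ[OF bQ] unfolding g_def seg1 b_def by simp
  have img: "g t \<in> OmegaT" if t: "t \<in> {0..1}" for t
  proof -
    have t0: "0 \<le> t" "t \<le> 1" using t by auto
    have "g t $ j \<in> Qset" for j
    proof -
      have "bform (seg t (a$j) b) (seg t (a$j) b) \<noteq> 0" using Xpos[OF t0, of j] by auto
      thus ?thesis unfolding g_def by (simp add: nrm_in_Q)
    qed
    moreover have "cmod (bform (g t $ j) (g t $ k) - 1) < 1" for j k
    proof -
      have c1: "bform b (a$k) = bform (a$k) b" by (rule bform_comm)
      have c2: "bform b b = 1" using bQ unfolding Qset_def by simp
      have num: "bform (seg t (a$j) b) (seg t (a$k) b) = (1 - of_real t)^2*bform (a$j) (a$k) + (1 - of_real t) * of_real t * bform (a$j) b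
              + of_real t * (1 - of_real t) * bform (a$k) b + (of_real t)^2"
        unfolding bform_seg c1 c2 by simp
      have "bform (g t $ j) (g t $ k) = bform (seg t (a$j) b) (seg t (a$k) b) /
          (csqrt (bform (seg t (a$j) b) (seg t (a$j) b)) * csqrt (bform (seg t (a$k) b) (seg t (a$k) b)))"
        unfolding g_def by (simp add: bform_nrm)
      also have "\<dots> = ((1 - of_real t)^2*bform (a$j) (a$k) + (1 - of_real t) * of_real t * bform (a$j) b
              + of_real t * (1 - of_real t) * bform (a$k) b + (of_real t)^2)
           / (csqrt ((1 - of_real t)^2 + 2*(1 - of_real t) * of_real t * bform (a$j) b + (of_real t)^2)
            * csqrt ((1 - of_real t)^2 + 2*(1 - of_real t) * of_real t * bform (a$k) b + (of_real t)^2))"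
        unfolding seg_self[OF aQ bQ] num ..
      finally show ?thesis using keyC[OF aD bD bD t0] by simp
    qed
    ultimately show ?thesis unfolding OmegaT_def by auto
  qed
  have cs: "continuous_on {0..1} (\<lambda>t. csqrt (bform (seg t (a$j) b) (seg t (a$j) b)))" for j
  proof (rule continuous_on_compose2[OF continuous_on_csqrt cont_bform_seg])
    show "(\<lambda>t. bform (seg t (a$j) b) (seg t (a$j) b)) ` {0..1} \<subseteq> - \<real>\<^sub>\<le>\<^sub>0"
    proof
      fix z assume "z \<in> (\<lambda>t. bform (seg t (a$j) b) (seg t (a$j) b)) ` {0..1}"
      then obtain t where t: "t \<in> {0..1}" and z: "z = bform (seg t (a$j) b) (seg t (a$j) b)" by auto
      have "0 < Re z" using Xpos[of t j] t z by auto
      thus "z \<in> - \<real>\<^sub>\<le>\<^sub>0" by (auto simp: complex_nonpos_Reals_iff)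
    qed
  qed
  have nz: "\<forall>t\<in>{0..1}. csqrt (bform (seg t (a$j) b) (seg t (a$j) b)) \<noteq> 0" for j
  proof
    fix t :: real assume "t \<in> {0..1}"
    hence "0 < Re (bform (seg t (a$j) b) (seg t (a$j) b))" using Xpos by auto
    thus "csqrt (bform (seg t (a$j) b) (seg t (a$j) b)) \<noteq> 0" by auto
  qed
  have cont: "continuous_on {0..1} g"
    unfolding g_def nrm_def
    by (intro continuous_on_vec_lambda continuous_on_divide cont_seg cs nz)
  show ?thesis unfolding path_component_def
    using cont start finish img unfolding path_def pathstart_def pathfinish_def path_image_def
    by blast
qed


definition emb :: "real^'n \<Rightarrow> complex^'n" where
  "emb u = (\<chi> i. complex_of_real (u$i))"

lemma emb_Q:
  assumes "norm u = 1" shows "emb u \<in> Qset"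
proof -
  have "u \<bullet> u = 1" using power2_norm_eq_inner[of u] assms by simp
  moreover have "bform (emb u) (emb u) = of_real (u \<bullet> u)"
    unfolding bform_def emb_def inner_vec_def by simp
  ultimately show ?thesis unfolding Qset_def by simp
qed

lemma emb_pc:
  assumes "CARD('n) \<ge> 2"
  shows "path_connected (emb ` sphere (0::real^'n) 1)"
proof (rule path_connected_continuous_image)
  show "continuous_on (sphere (0::real^'n) 1) emb"
    unfolding emb_def by (intro continuous_on_vec_lambda continuous_intros)
  show "path_connected (sphere (0::real^'n) 1)"
    using assms by (simp add: path_connected_sphere_eq)
qed

lemma toR:
  assumes cQ: "(c::complex^'n) \<in> Qset"
  shows "\<exists>u. norm u = 1 \<and> path_component Qset (emb u) c"
proof -
  define X where "X = (\<Sum>i\<in>UNIV. (Re (c$i))^2)"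
  define Y where "Y = (\<Sum>i\<in>UNIV. (Im (c$i))^2)"
  define Z where "Z = (\<Sum>i\<in>UNIV. Re (c$i) * Im (c$i))"
  have b1: "bform c c = 1" using cQ unfolding Qset_def by simp
  have "Re (bform c c) = X - Y" unfolding bform_def X_def Y_def
    by (simp add: Re_sum sum_subtractf[symmetric] power2_eq_square)
  hence XY: "X = 1 + Y" using b1 by simp
  have "Im (bform c c) = 2 * Z" unfolding bform_def Z_def
    by (simp add: Im_sum sum_distrib_left algebra_simps)
  hence Z0: "Z = 0" using b1 by simp
  have Y0: "0 \<le> Y" unfolding Y_def by (simp add: sum_nonneg)
  hence Xp: "0 < X" using XY by simp
  define lam where "lam = (\<lambda>t::real. sqrt (1 + t^2 * Y) / sqrt X)"
  have lam2: "(lam t)^2 * X = 1 + t^2 * Y" for t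
    unfolding lam_def using Xp Y0 by (simp add: power_divide)
  define h where "h = (\<lambda>t. \<chi> i. complex_of_real (lam t * Re (c$i)) + \<i> * complex_of_real (t * Im (c$i)))"
  define u where "u = (\<chi> i. Re (c$i) / sqrt X)"
  have nu: "norm u = 1"
  proof -
    have "u \<bullet> u = (\<Sum>i\<in>UNIV. (Re (c$i))^2 / X)" unfolding u_def inner_vec_def
      by (rule sum.cong) (use Xp in \<open>simp_all add: power2_eq_square\<close>)
    also have "\<dots> = X / X" unfolding X_def by (simp only: sum_divide_distrib[symmetric])
    finally have "u \<bullet> u = X / X" .
    hence "norm u ^2 = 1" using Xp by (simp add: power2_norm_eq_inner)
    thus ?thesis by (simp add: power2_eq_1_iff) (smt (verit) norm_ge_zero)
  qed
  have h0: "h 0 = emb u" unfolding h_def emb_def u_def lam_def by (simp add: vec_eq_iff)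
  have lam1: "lam 1 = 1" unfolding lam_def XY using Y0 by simp
  have h1: "h 1 = c" unfolding h_def lam1 by (simp add: vec_eq_iff complex_eq_iff)
  have hQ: "h t \<in> Qset" for t
  proof -
    have "Re (bform (h t) (h t)) = (lam t)^2 * X - t^2 * Y"
      unfolding bform_def h_def X_def Y_def
      by (simp add: Re_sum sum_subtractf[symmetric] sum_distrib_left power2_eq_square algebra_simps)
    hence "Re (bform (h t) (h t)) = 1" using lam2[of t] by simp
    moreover have "Im (bform (h t) (h t)) = 2 * lam t * t * Z"
      unfolding bform_def h_def Z_def
      by (simp add: Im_sum sum_distrib_left algebra_simps)
    hence "Im (bform (h t) (h t)) = 0" using Z0 by simp
    ultimately show ?thesis unfolding Qset_def by (simp add: complex_eq_iff)
  qed
  have cont: "continuous_on {0..1} h"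
    unfolding h_def lam_def using Xp by (intro continuous_on_vec_lambda continuous_intros) auto
  have "path_component Qset (emb u) c" unfolding path_component_def
    using cont h0 h1 hQ unfolding path_def pathstart_def pathfinish_def path_image_def by blast
  thus ?thesis using nu by blast
qed

lemma Q_pc:
  assumes "CARD('n) \<ge> 2"
  shows "path_connected (Qset :: (complex^'n) set)"
  unfolding path_connected_component
proof (intro ballI)
  fix c c' :: "complex^'n" assume "c \<in> Qset" "c' \<in> Qset"
  then obtain u u' where u: "norm u = 1" "path_component Qset (emb u) c"
    and u': "norm u' = 1" "path_component Qset (emb u') c'" using toR by metis
  have sub: "emb ` sphere (0::real^'n) 1 \<subseteq> Qset" using emb_Q by auto
  have "path_component (emb ` sphere (0::real^'n) 1) (emb u) (emb u')"
    using emb_pc[OF assms] u(1) u'(1) unfolding path_connected_component by auto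
  hence "path_component Qset (emb u) (emb u')" using sub path_component_of_subset by blast
  thus "path_component Qset c c'" using u(2) u'(2)
    by (meson path_component_sym path_component_trans)
qed

theorem lemma3:
  assumes "CARD('n) \<ge> 2"
    and "CARD('m) = CARD('n) + 1"
  shows "path_connected (OmegaT :: ((complex ^ 'n) ^ 'm) set)"
  unfolding path_connected_component
proof (intro ballI)
  fix a a' :: "(complex ^ 'n) ^ 'm" assume a: "a \<in> OmegaT" and a': "a' \<in> OmegaT"
  define D where "D = (\<lambda>x::complex^'n. (\<chi> j::'m. x))"
  have DO: "D ` Qset \<subseteq> OmegaT" unfolding D_def OmegaT_def Qset_def by auto
  have "path_connected (D ` Qset)"
    by (rule path_connected_continuous_image[OF _ Q_pc[OF assms(1)]])
      (unfold D_def, intro continuous_on_vec_lambda continuous_intros)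
  moreover have "a $ undefined \<in> Qset" "a' $ undefined \<in> Qset"
    using a a' unfolding OmegaT_def by auto
  ultimately have "path_component (D ` Qset) (D (a $ undefined)) (D (a' $ undefined))"
    unfolding path_connected_component by auto
  hence "path_component OmegaT (D (a $ undefined)) (D (a' $ undefined))"
    using DO path_component_of_subset by blast
  moreover have "path_component OmegaT a (D (a $ undefined))" unfolding D_def by (rule to_diag[OF a])
  moreover have "path_component OmegaT a' (D (a' $ undefined))" unfolding D_def by (rule to_diag[OF a'])
  ultimately show "path_component OmegaT a a'"
    by (meson path_component_sym path_component_trans)
qed

end
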